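(* Let $(F,v)$ be a Krasner valued hyperfield with norm $\rho_v$, and let $w$ be a valuation on $F$ with $\mathcal{O}_w=\{x\in F: x-x\subseteq 1-1\}$ (such $w$ exists and is a Krasner valuation). Then $w$ is equivalent to the coarsening $v_{\mathrm{ig}(\rho_v)}$ of $v$ corresponding to the convex subgroup $\mathrm{ig}(\rho_v)$. In particular, $v_{\mathrm{ig}(\rho_v)}$ is a Krasner valuation.
   Context: A hyperfield is $(F,+,\cdot,0,1)$ with $+$ a multivalued operation making $(F,+,0)$ a canonical hypergroup (associative, commutative, unique inverses $-x$ with $0\in x+(-x)$, and $z\in x+y\Rightarrow y\in z+(-x)$; write $x-y:=x+(-y)$, $A+B:=\bigcup_{a\in A,b\in B}a+b$), $(F,\cdot)$ commutative with $0$ absorbing, $x(y+z)=xy+xz$, and $F\setminus\{0\}$ an abelian group with neutral $1\neq0$. Valuation on $F$: for an ordered abelian group $\Gamma$ and $\infty>\Gamma$ with $\gamma+\infty=\infty+\gamma=\infty$, a surjective map $v:F\to\Gamma\cup\{\infty\}$ with $vx=\infty\iff x=0$, $v(xy)=vx+vy$, $z\in x+y\Rightarrow vz\ge\min\{vx,vy\}$; $vF:=v(F\setminus\{0\})$, $\mathcal{O}_v:=\{x:vx\ge0\}$. Valuations $v_i:F\to\Gamma_i\cup\{\infty\}$ are equivalent if $v_2=\sigma\circ v_1$ for an order-preserving group isomorphism $\sigma:\Gamma_1\to\Gamma_2$ ($\sigma(\infty)=\infty$). An initial segment of $\Gamma$ is $\rho\subseteq\Gamma$ with $\delta\in\rho,\gamma<\delta\Rightarrow\gamma\in\rho$;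 $\rho+\gamma:=\{\delta+\gamma:\delta\in\rho\}$; "$\alpha>\rho+\gamma$" means $\alpha\notin\rho+\gamma$. The invariance group of $\rho$ is $\mathrm{ig}(\rho):=\{\gamma\in\Gamma:\rho+\gamma=\rho\}$; if $0\in\rho$ it is a convex subgroup of $\Gamma$ (a subgroup $\Delta$ with $\delta_1<\gamma<\delta_2$, $\delta_i\in\Delta\Rightarrow\gamma\in\Delta$). For a convex subgroup $\Delta$ of $vF$, $vF/\Delta$ is ordered by $x+\Delta\prec y+\Delta$ iff $x<y$ and $y-x\notin\Delta$, and the coarsening $v_\Delta:F\to(vF/\Delta)\cup\{\infty\}$, $x\mapsto vx+\Delta$, is a valuation on $F$. Krasner valuation: a valuation $v$ on $F$ such that (KVH1) for all $x,y\in F$ with $0\notin x+y$, $v(x+y)$ is a singleton; (KVH2) there is an initial segment $\rho_v$ of $vF$ with $0\in\rho_v$ (the norm) such that for all $x,y,z,t\in F$ with $z\in x+y$: $t\in x+y$ iff $vs>\rho_v+\min\{vx,vy\}$ for all $s\in z-t$. *)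

theory Defs
  imports Main
begin

definition hsetadd :: "('a \<Rightarrow> 'a \<Rightarrow> 'a set) \<Rightarrow> 'a set \<Rightarrow> 'a set \<Rightarrow> 'a set" where
  "hsetadd add A B = (\<Union>a\<in>A. \<Union>b\<in>B. add a b)"

definition hneg :: "('a \<Rightarrow> 'a \<Rightarrow> 'a set) \<Rightarrow> 'a \<Rightarrow> 'a \<Rightarrow> 'a" where
  "hneg add zero x = (THE y. zero \<in> add x y)"

definition hsub :: "('a \<Rightarrow> 'a \<Rightarrow> 'a set) \<Rightarrow> 'a \<Rightarrow> 'a \<Rightarrow> 'a \<Rightarrow> 'a set" where
  "hsub add zero x y = add x (hneg add zero y)"

definition hyperfield ::
  "('a \<Rightarrow> 'a \<Rightarrow> 'a set) \<Rightarrow> ('a \<Rightarrow> 'a \<Rightarrow> 'a) \<Rightarrow> 'a \<Rightarrow> 'a \<Rightarrow> bool" where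
  "hyperfield add mul zero one \<longleftrightarrow>
     \<comment> \<open>(F,+,0) canonical hypergroup\<close>
     (\<forall>x y. add x y \<noteq> {}) \<and>
     (\<forall>x y z. hsetadd add (add x y) {z} = hsetadd add {x} (add y z)) \<and>
     (\<forall>x y. add x y = add y x) \<and>
     (\<forall>x. add zero x = {x}) \<and>
     (\<forall>x. \<exists>!y. zero \<in> add x y) \<and>
     (\<forall>x y z. z \<in> add x y \<longrightarrow> y \<in> add z (hneg add zero x)) \<and>
     \<comment> \<open>multiplication\<close>
     (\<forall>x y. mul x y = mul y x) \<and>
     (\<forall>x y z. mul (mul x y) z = mul x (mul y z)) \<and>
     (\<forall>x. mul zero x = zero) \<and>
     (\<forall>x y z. mul x ` add y z = add (mul x y) (mul x z)) \<and>
     \<comment> \<open>F minus 0 is an abelian group with neutral element 1 \<noteq> 0\<close>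
     one \<noteq> zero \<and>
     (\<forall>x. mul one x = x) \<and>
     (\<forall>x y. x \<noteq> zero \<longrightarrow> y \<noteq> zero \<longrightarrow> mul x y \<noteq> zero) \<and>
     (\<forall>x. x \<noteq> zero \<longrightarrow> (\<exists>y. y \<noteq> zero \<and> mul x y = one))"

record 'g ogroup =
  og_carrier :: "'g set"
  og_add :: "'g \<Rightarrow> 'g \<Rightarrow> 'g"
  og_zero :: 'g
  og_le :: "'g \<Rightarrow> 'g \<Rightarrow> bool"

definition ordered_abelian_group :: "('g, 'm) ogroup_scheme \<Rightarrow> bool" where
  "ordered_abelian_group G \<longleftrightarrow>
     (\<forall>a\<in>og_carrier G. \<forall>b\<in>og_carrier G. og_add G a b \<in> og_carrier G) \<and>
     (\<forall>a\<in>og_carrier G. \<forall>b\<in>og_carrier G. \<forall>c\<in>og_carrier G.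
        og_add G (og_add G a b) c = og_add G a (og_add G b c)) \<and>
     (\<forall>a\<in>og_carrier G. \<forall>b\<in>og_carrier G. og_add G a b = og_add G b a) \<and>
     og_zero G \<in> og_carrier G \<and>
     (\<forall>a\<in>og_carrier G. og_add G (og_zero G) a = a) \<and>
     (\<forall>a\<in>og_carrier G. \<exists>b\<in>og_carrier G. og_add G a b = og_zero G) \<and>
     (\<forall>a\<in>og_carrier G. og_le G a a) \<and>
     (\<forall>a\<in>og_carrier G. \<forall>b\<in>og_carrier G. og_le G a b \<longrightarrow> og_le G b a \<longrightarrow> a = b) \<and>
     (\<forall>a\<in>og_carrier G. \<forall>b\<in>og_carrier G. \<forall>c\<in>og_carrier G.
        og_le G a b \<longrightarrow> og_le G b c \<longrightarrow> og_le G a c) \<and>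
     (\<forall>a\<in>og_carrier G. \<forall>b\<in>og_carrier G. og_le G a b \<or> og_le G b a) \<and>
     (\<forall>a\<in>og_carrier G. \<forall>b\<in>og_carrier G. \<forall>c\<in>og_carrier G.
        og_le G a b \<longrightarrow> og_le G (og_add G a c) (og_add G b c))"

definition type_og :: "('g::linordered_ab_group_add) ogroup" where
  "type_og = \<lparr>og_carrier = UNIV, og_add = (+), og_zero = 0, og_le = (\<le>)\<rparr>"

text \<open>Gamma \<union> {\<infinity>} is modelled as 'g option, with None = \<infinity>.\<close>

fun ext_le :: "('g, 'm) ogroup_scheme \<Rightarrow> 'g option \<Rightarrow> 'g option \<Rightarrow> bool" where
  "ext_le G a None = True"
| "ext_le G None (Some b) = False"
| "ext_le G (Some a) (Some b) = og_le G a b"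

fun ext_add :: "('g, 'm) ogroup_scheme \<Rightarrow> 'g option \<Rightarrow> 'g option \<Rightarrow> 'g option" where
  "ext_add G (Some a) (Some b) = Some (og_add G a b)"
| "ext_add G _ _ = None"

definition ext_min :: "('g, 'm) ogroup_scheme \<Rightarrow> 'g option \<Rightarrow> 'g option \<Rightarrow> 'g option" where
  "ext_min G a b = (if ext_le G a b then a else b)"

definition valuation ::
  "('a \<Rightarrow> 'a \<Rightarrow> 'a set) \<Rightarrow> ('a \<Rightarrow> 'a \<Rightarrow> 'a) \<Rightarrow> 'a \<Rightarrow> ('g, 'm) ogroup_scheme
     \<Rightarrow> ('a \<Rightarrow> 'g option) \<Rightarrow> bool" where
  "valuation add mul zero G v \<longleftrightarrow>
     ordered_abelian_group G \<and>
     range v = insert None (Some ` og_carrier G) \<and>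
     (\<forall>x. v x = None \<longleftrightarrow> x = zero) \<and>
     (\<forall>x y. v (mul x y) = ext_add G (v x) (v y)) \<and>
     (\<forall>x y z. z \<in> add x y \<longrightarrow> ext_le G (ext_min G (v x) (v y)) (v z))"

definition value_group :: "('a \<Rightarrow> 'g option) \<Rightarrow> 'g set" where
  "value_group v = {g. \<exists>x. v x = Some g}"

definition valuation_ring :: "('g, 'm) ogroup_scheme \<Rightarrow> ('a \<Rightarrow> 'g option) \<Rightarrow> 'a set" where
  "valuation_ring G v = {x. ext_le G (Some (og_zero G)) (v x)}"

definition equivalent_valuations ::
  "('g1, 'm1) ogroup_scheme \<Rightarrow> ('a \<Rightarrow> 'g1 option) \<Rightarrow>
   ('g2, 'm2) ogroup_scheme \<Rightarrow> ('a \<Rightarrow> 'g2 option) \<Rightarrow> bool" where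
  "equivalent_valuations G1 v1 G2 v2 \<longleftrightarrow>
     (\<exists>\<sigma>. bij_betw \<sigma> (og_carrier G1) (og_carrier G2) \<and>
        (\<forall>a\<in>og_carrier G1. \<forall>b\<in>og_carrier G1. \<sigma> (og_add G1 a b) = og_add G2 (\<sigma> a) (\<sigma> b)) \<and>
        (\<forall>a\<in>og_carrier G1. \<forall>b\<in>og_carrier G1. og_le G1 a b \<longleftrightarrow> og_le G2 (\<sigma> a) (\<sigma> b)) \<and>
        (\<forall>x. v2 x = map_option \<sigma> (v1 x)))"

definition shift :: "('g, 'm) ogroup_scheme \<Rightarrow> 'g set \<Rightarrow> 'g \<Rightarrow> 'g set" where
  "shift G \<rho> \<gamma> = (\<lambda>\<delta>. og_add G \<delta> \<gamma>) ` \<rho>"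

definition initial_segment :: "('g, 'm) ogroup_scheme \<Rightarrow> 'g set \<Rightarrow> 'g set \<Rightarrow> bool" where
  "initial_segment G S \<rho> \<longleftrightarrow> \<rho> \<subseteq> S \<and>
     (\<forall>\<delta>\<in>\<rho>. \<forall>\<gamma>\<in>S. og_le G \<gamma> \<delta> \<and> \<gamma> \<noteq> \<delta> \<longrightarrow> \<gamma> \<in> \<rho>)"

definition ig :: "('g, 'm) ogroup_scheme \<Rightarrow> 'g set \<Rightarrow> 'g set" where
  "ig G \<rho> = {\<gamma> \<in> og_carrier G. shift G \<rho> \<gamma> = \<rho>}"

text \<open>"alpha > rho + gamma" for alpha, gamma in Gamma \<union> {\<infinity>}: means alpha \<notin> rho + gamma,
  with the convention rho + \<infinity> = Gamma.\<close>
fun above_shift :: "('g, 'm) ogroup_scheme \<Rightarrow> 'g set \<Rightarrow> 'g option \<Rightarrow> 'g option \<Rightarrow> bool" where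
  "above_shift G \<rho> None \<gamma> = True"
| "above_shift G \<rho> (Some a) None = False"
| "above_shift G \<rho> (Some a) (Some g) = (a \<notin> shift G \<rho> g)"

definition krasner_norm ::
  "('a \<Rightarrow> 'a \<Rightarrow> 'a set) \<Rightarrow> 'a \<Rightarrow> ('g, 'm) ogroup_scheme \<Rightarrow> ('a \<Rightarrow> 'g option)
     \<Rightarrow> 'g set \<Rightarrow> bool" where
  "krasner_norm add zero G v \<rho> \<longleftrightarrow>
     initial_segment G (value_group v) \<rho> \<and> og_zero G \<in> \<rho> \<and>
     (\<forall>x y z t. z \<in> add x y \<longrightarrow>
        (t \<in> add x y \<longleftrightarrow>
          (\<forall>s\<in>hsub add zero z t. above_shift G \<rho> (v s) (ext_min G (v x) (v y)))))"

definition krasner_valuation ::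
  "('a \<Rightarrow> 'a \<Rightarrow> 'a set) \<Rightarrow> ('a \<Rightarrow> 'a \<Rightarrow> 'a) \<Rightarrow> 'a \<Rightarrow> ('g, 'm) ogroup_scheme
     \<Rightarrow> ('a \<Rightarrow> 'g option) \<Rightarrow> bool" where
  "krasner_valuation add mul zero G v \<longleftrightarrow>
     valuation add mul zero G v \<and>
     (\<forall>x y. zero \<notin> add x y \<longrightarrow> (\<exists>c. v ` add x y = {c})) \<and>
     (\<exists>\<rho>. krasner_norm add zero G v \<rho>)"

definition coset :: "('g::linordered_ab_group_add) set \<Rightarrow> 'g \<Rightarrow> 'g set" where
  "coset \<Delta> \<gamma> = (\<lambda>\<delta>. \<gamma> + \<delta>) ` \<Delta>"

definition quotient_og :: "('g::linordered_ab_group_add) set \<Rightarrow> 'g set \<Rightarrow> 'g set ogroup" where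
  "quotient_og S \<Delta> =
     \<lparr>og_carrier = coset \<Delta> ` S,
      og_add = (\<lambda>A B. {a + b |a b. a \<in> A \<and> b \<in> B}),
      og_zero = \<Delta>,
      og_le = (\<lambda>A B. A = B \<or> (\<exists>x\<in>A. \<exists>y\<in>B. x < y \<and> y - x \<notin> \<Delta>))\<rparr>"

definition coarsening ::
  "('a \<Rightarrow> ('g::linordered_ab_group_add) option) \<Rightarrow> 'g set \<Rightarrow> 'a \<Rightarrow> 'g set option" where
  "coarsening v \<Delta> x = map_option (coset \<Delta>) (v x)"

end

theory Submission
  imports Defs
begin

lemma shift_type_og: "x \<in> shift type_og \<rho> g \<longleftrightarrow> x - g \<in> \<rho>"
  unfolding shift_def type_og_def by (auto simp: image_iff) (metis diff_add_cancel)

locale seg =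
  fixes \<rho> :: "'g::linordered_ab_group_add set"
  assumes down: "\<And>a b. b \<in> \<rho> \<Longrightarrow> a \<le> b \<Longrightarrow> a \<in> \<rho>"
    and zin: "0 \<in> \<rho>"
begin

definition "D = ig type_og \<rho>"
definition "P = {g. \<rho> \<subseteq> shift type_og \<rho> g}"

lemma D_iff: "g \<in> D \<longleftrightarrow> (\<forall>x. x - g \<in> \<rho> \<longleftrightarrow> x \<in> \<rho>)"
  unfolding D_def ig_def by (auto simp: type_og_def[symmetric] shift_type_og set_eq_iff) (simp add: type_og_def)

lemma P_iff: "g \<in> P \<longleftrightarrow> (\<forall>x\<in>\<rho>. x - g \<in> \<rho>)"
  unfolding P_def by (auto simp: shift_type_og)

lemma P_nonneg: "0 \<le> g \<Longrightarrow> g \<in> P"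
  unfolding P_iff using down by (meson diff_le_eq le_add_same_cancel1)

lemma P_add: "a \<in> P \<Longrightarrow> b \<in> P \<Longrightarrow> a + b \<in> P"
  unfolding P_iff by (metis diff_diff_eq)

lemma D_P: "g \<in> D \<Longrightarrow> g \<in> P"
  unfolding P_iff D_iff by blast

lemma P_neg_D: "g \<in> P \<Longrightarrow> - g \<in> P \<Longrightarrow> g \<in> D"
  unfolding P_iff D_iff by (metis diff_minus_eq_add diff_add_cancel)

lemma D_neg: "g \<in> D \<Longrightarrow> - g \<in> D"
  unfolding D_iff by (metis diff_minus_eq_add diff_add_cancel)

lemma D_add: "a \<in> D \<Longrightarrow> b \<in> D \<Longrightarrow> a + b \<in> D"
  unfolding D_iff by (metis diff_diff_eq)

lemma D_zero: "0 \<in> D"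
  unfolding D_iff by simp

lemma D_diff: "a \<in> D \<Longrightarrow> b \<in> D \<Longrightarrow> a - b \<in> D"
  using D_add D_neg by (metis diff_conv_add_uminus)

lemma P_D: "a \<in> P \<Longrightarrow> d \<in> D \<Longrightarrow> a + d \<in> P"
  using D_P P_add by blast

lemma P_total: "g \<in> P \<or> - g \<in> P"
  using P_nonneg by (metis le_cases neg_0_le_iff_le)

lemma P_nonpos: "g \<in> P \<Longrightarrow> g \<le> 0 \<Longrightarrow> g \<in> D"
  using P_neg_D P_nonneg by (metis neg_0_le_iff_le)

lemma P_notD_pos: "g \<in> P \<Longrightarrow> g \<notin> D \<Longrightarrow> 0 < g"
  using P_nonpos by force


lemma coset_mem: "x \<in> coset D a \<longleftrightarrow> x - a \<in> D"
  unfolding coset_def by (auto simp: image_iff) (metis add_diff_cancel_left' diff_add_cancel add.commute)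

lemma coset_eq: "coset D a = coset D b \<longleftrightarrow> b - a \<in> D"
proof
  assume "coset D a = coset D b"
  then have "b \<in> coset D a" using coset_mem D_zero by (metis diff_self)
  then show "b - a \<in> D" by (simp add: coset_mem)
next
  assume h: "b - a \<in> D"
  show "coset D a = coset D b"
  proof (rule set_eqI)
    fix x
    have "x - a = (x - b) + (b - a)" by simp
    moreover have "x - b = (x - a) - (b - a)" by simp
    ultimately show "x \<in> coset D a \<longleftrightarrow> x \<in> coset D b"
      unfolding coset_mem using h D_add D_diff by metis
  qed
qed

lemma q_add: "og_add (quotient_og S D) (coset D a) (coset D b) = coset D (a + b)"
proof -
  have "{x + y |x y. x \<in> coset D a \<and> y \<in> coset D b} = coset D (a + b)"
  proof (rule set_eqI, rule iffI)
    fix z assume "z \<in> {x + y |x y. x \<in> coset D a \<and> y \<in> coset D b}"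
    then obtain x y where "z = x + y" "x - a \<in> D" "y - b \<in> D" by (auto simp: coset_mem)
    moreover have "x + y - (a + b) = (x - a) + (y - b)" by simp
    ultimately show "z \<in> coset D (a + b)" using D_add[of "x - a" "y - b"] by (metis coset_mem)
  next
    fix z assume "z \<in> coset D (a + b)"
    then have "z - b \<in> coset D a" "b \<in> coset D b"
      by (auto simp: coset_mem D_zero diff_diff_eq add.commute)
    then show "z \<in> {x + y |x y. x \<in> coset D a \<and> y \<in> coset D b}"
      by (metis (mono_tags, lifting) diff_add_cancel mem_Collect_eq)
  qed
  then show ?thesis by (simp add: quotient_og_def)
qed

lemma q_zero: "og_zero (quotient_og S D) = coset D 0"
proof -
  have "coset D 0 = D" by (auto simp: coset_mem)
  then show ?thesis by (simp add: quotient_og_def)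
qed

lemma q_carrier: "og_carrier (quotient_og S D) = coset D ` S"
  by (simp add: quotient_og_def)

lemma q_le: "og_le (quotient_og S D) (coset D a) (coset D b) \<longleftrightarrow> b - a \<in> P"
proof
  assume "og_le (quotient_og S D) (coset D a) (coset D b)"
  then have "coset D a = coset D b \<or> (\<exists>x\<in>coset D a. \<exists>y\<in>coset D b. x < y \<and> y - x \<notin> D)"
    by (simp add: quotient_og_def)
  then show "b - a \<in> P"
  proof
    assume "coset D a = coset D b" then show ?thesis using coset_eq D_P by blast
  next
    assume "\<exists>x\<in>coset D a. \<exists>y\<in>coset D b. x < y \<and> y - x \<notin> D"
    then obtain x y where xy: "x - a \<in> D" "y - b \<in> D" "x < y" by (auto simp: coset_mem)
    have "y - x \<in> P" using xy(3) P_nonneg by simp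
    moreover have "b - a = (y - x) + ((x - a) - (y - b))" by simp
    ultimately show ?thesis using P_D D_diff xy by metis
  qed
next
  assume h: "b - a \<in> P"
  show "og_le (quotient_og S D) (coset D a) (coset D b)"
  proof (cases "b - a \<in> D")
    case True then show ?thesis using coset_eq by (simp add: quotient_og_def)
  next
    case False
    then have "a < b" using P_notD_pos[OF h False] by simp
    moreover have "a \<in> coset D a" "b \<in> coset D b" by (auto simp: coset_mem D_zero)
    ultimately show ?thesis using False by (auto simp: quotient_og_def)
  qed
qed

lemma q_oag: "ordered_abelian_group (quotient_og UNIV D)"
  unfolding ordered_abelian_group_def q_carrier q_zero
proof (intro conjI ballI impI; (elim imageE)?)
  fix A B a b assume "A = coset D a" "B = coset D b"
  then show "og_add (quotient_og UNIV D) A B \<in> range (coset D)" by (simp add: q_add)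
next
  fix A B C a b c assume "A = coset D a" "B = coset D b" "C = coset D c"
  then show "og_add (quotient_og UNIV D) (og_add (quotient_og UNIV D) A B) C =
         og_add (quotient_og UNIV D) A (og_add (quotient_og UNIV D) B C)" by (simp add: q_add add.assoc)
next
  fix A B a b assume "A = coset D a" "B = coset D b"
  then show "og_add (quotient_og UNIV D) A B = og_add (quotient_og UNIV D) B A" by (simp add: q_add add.commute)
next
  show "coset D 0 \<in> range (coset D)" by simp
next
  fix A a assume "A = coset D a"
  then show "og_add (quotient_og UNIV D) (coset D 0) A = A" by (simp add: q_add)
next
  fix A a assume "A = coset D a"
  then have "og_add (quotient_og UNIV D) A (coset D (-a)) = coset D 0" by (simp add: q_add)
  then show "\<exists>B\<in>range (coset D). og_add (quotient_og UNIV D) A B = coset D 0" by blast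
next
  fix A a assume "A = coset D a"
  then show "og_le (quotient_og UNIV D) A A" by (simp add: q_le P_nonneg)
next
  fix A B a b assume "A = coset D a" "B = coset D b" "og_le (quotient_og UNIV D) A B" "og_le (quotient_og UNIV D) B A"
  then show "A = B" using P_neg_D coset_eq q_le by (metis minus_diff_eq)
next
  fix A B C a b c assume "A = coset D a" "B = coset D b" "C = coset D c"
    "og_le (quotient_og UNIV D) A B" "og_le (quotient_og UNIV D) B C"
  then have "b - a \<in> P" "c - b \<in> P" by (simp_all add: q_le)
  then have "(c - b) + (b - a) \<in> P" by (rule P_add[rotated])
  then show "og_le (quotient_og UNIV D) A C" using \<open>A = _\<close> \<open>C = _\<close> by (simp add: q_le)
next
  fix A B a b assume "A = coset D a" "B = coset D b"
  then show "og_le (quotient_og UNIV D) A B \<or> og_le (quotient_og UNIV D) B A"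
    using P_total by (simp add: q_le) (metis minus_diff_eq)
next
  fix A B C a b c assume "A = coset D a" "B = coset D b" "C = coset D c"
    "og_le (quotient_og UNIV D) A B"
  then show "og_le (quotient_og UNIV D) (og_add (quotient_og UNIV D) A C) (og_add (quotient_og UNIV D) B C)"
    by (simp add: q_add q_le)
qed

end

locale hf =
  fixes add :: "'a \<Rightarrow> 'a \<Rightarrow> 'a set" and mul :: "'a \<Rightarrow> 'a \<Rightarrow> 'a" and zero one :: 'a
  assumes H: "hyperfield add mul zero one"
begin

abbreviation "neg \<equiv> hneg add zero"

lemma HS0: "\<forall>x. \<exists>!y. zero \<in> add x y"
  using H unfolding hyperfield_def by (elim conjE) assumption
lemma HS1: "\<forall>x. add zero x = {x}"
  using H unfolding hyperfield_def by (elim conjE) assumption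
lemma HS2: "\<forall>x y. add x y = add y x"
  using H unfolding hyperfield_def by (elim conjE) assumption
lemma HS3: "\<forall>x y. mul x y = mul y x"
  using H unfolding hyperfield_def by (elim conjE) assumption
lemma HS4: "\<forall>x y z. mul (mul x y) z = mul x (mul y z)"
  using H unfolding hyperfield_def by (elim conjE) assumption
lemma HS5: "\<forall>x. mul zero x = zero"
  using H unfolding hyperfield_def by (elim conjE) assumption
lemma HS6: "\<forall>x. mul one x = x"
  using H unfolding hyperfield_def by (elim conjE) assumption
lemma HS7: "\<forall>x y z. mul x ` add y z = add (mul x y) (mul x z)"
  using H unfolding hyperfield_def by (elim conjE) assumption
lemma HS8: "one \<noteq> zero"
  using H unfolding hyperfield_def by (elim conjE) assumption
lemma HS9: "\<forall>x y. x \<noteq> zero \<longrightarrow> y \<noteq> zero \<longrightarrow> mul x y \<noteq> zero"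
  using H unfolding hyperfield_def by (elim conjE) assumption
lemma HS10: "\<forall>x. x \<noteq> zero \<longrightarrow> (\<exists>y. y \<noteq> zero \<and> mul x y = one)"
  using H unfolding hyperfield_def by (elim conjE) assumption
lemmas HS = HS0 HS1 HS2 HS3 HS4 HS5 HS6 HS7 HS8 HS9 HS10

lemma ex1: "\<exists>!y. zero \<in> add x y" using HS0 by blast
lemma neg_in: "zero \<in> add x (neg x)"
  unfolding hneg_def using theI'[OF ex1] .
lemma neg_uniq: "zero \<in> add x y \<Longrightarrow> y = neg x"
  unfolding hneg_def by (rule the1_equality[OF ex1, symmetric])
lemma add_zero: "add zero x = {x}" using HS1 by blast
lemma add_comm: "add x y = add y x" using HS2 by blast
lemma mul_comm: "mul x y = mul y x" using HS3 by blast
lemma mul_assoc: "mul (mul x y) z = mul x (mul y z)" using HS4 by blast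
lemma mul_zero: "mul zero x = zero" "mul x zero = zero" using HS5 apply blast using HS5 HS3 by metis
lemma mul_one: "mul one x = x" "mul x one = x" using HS6 apply blast using HS6 HS3 by metis
lemma distrib: "mul x ` add y z = add (mul x y) (mul x z)" using HS7 by blast
lemma one_nz: "one \<noteq> zero" using HS8 by blast
lemma mul_nz: "x \<noteq> zero \<Longrightarrow> y \<noteq> zero \<Longrightarrow> mul x y \<noteq> zero" using HS9 by blast
lemma inv_ex: "x \<noteq> zero \<Longrightarrow> \<exists>y. y \<noteq> zero \<and> mul x y = one" using HS10 by blast

lemma neg_mul: "neg x = mul x (neg one)"
proof -
  have "mul x zero \<in> mul x ` add one (neg one)" using neg_in by blast
  then have "zero \<in> add x (mul x (neg one))" by (simp add: distrib mul_zero mul_one)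
  then show ?thesis using neg_uniq by simp
qed

lemma neg_neg: "neg (neg y) = y"
  using neg_uniq[of "neg y" y] neg_in[of y] add_comm[of y "neg y"] by simp

lemma negone_sq: "mul (neg one) (neg one) = one"
  using neg_mul[of "neg one"] neg_neg[of one] by simp

lemma hsub_zero: "hsub add zero zero t = {neg t}"
  unfolding hsub_def by (simp add: add_zero)

lemma negone_nz: "neg one \<noteq> zero"
  using negone_sq mul_zero(1)[of "neg one"] one_nz by auto

lemma V1: "valuation add mul zero G u \<Longrightarrow> range u = insert None (Some ` og_carrier G)"
  unfolding valuation_def by (elim conjE) assumption
lemma V2: "valuation add mul zero G u \<Longrightarrow> \<forall>x. u x = None \<longleftrightarrow> x = zero"
  unfolding valuation_def by (elim conjE) assumption
lemma V3: "valuation add mul zero G u \<Longrightarrow> \<forall>x y. u (mul x y) = ext_add G (u x) (u y)"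
  unfolding valuation_def by (elim conjE) assumption

lemma V4: "valuation add mul zero G u \<Longrightarrow> \<forall>x y z. z \<in> add x y \<longrightarrow> ext_le G (ext_min G (u x) (u y)) (u z)"
  unfolding valuation_def by (elim conjE) assumption

lemma val_zero:
  assumes "valuation add mul zero G u"
  shows "u x = None \<longleftrightarrow> x = zero"
  using V2[OF assms] by simp

lemma val_mul:
  assumes "valuation add mul zero type_og u" "u x = Some a" "u y = Some b"
  shows "u (mul x y) = Some (a + b)"
  using V3[OF assms(1)] assms(2,3) by (simp add: type_og_def)

lemma val_surj:
  assumes "valuation add mul zero type_og u"
  shows "\<exists>x. u x = Some g"
proof -
  have "Some g \<in> range u" using V1[OF assms] by (simp add: type_og_def)
  then show ?thesis by auto
qed

lemma val_one:
  assumes "valuation add mul zero type_og u"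
  shows "u one = Some 0"
proof -
  obtain a where a: "u one = Some a" using val_zero[OF assms, of one] one_nz by (cases "u one") auto
  have "u (mul one one) = Some (a + a)" using val_mul[OF assms a a] .
  then show ?thesis using a mul_one by simp
qed

lemma val_neg:
  assumes "valuation add mul zero type_og u"
  shows "u (neg x) = u x"
proof -
  obtain a where a: "u (neg one) = Some a" using val_zero[OF assms, of "neg one"] negone_nz by (cases "u (neg one)") auto
  have "u (mul (neg one) (neg one)) = Some (a + a)" using val_mul[OF assms a a] .
  then have "a = 0" using negone_sq val_one[OF assms] by simp
  show ?thesis
  proof (cases "u x")
    case None
    then have "x = zero" using val_zero[OF assms] by simp
    then have "neg x = zero" by (subst neg_mul) (simp add: mul_zero)
    then show ?thesis using \<open>x = zero\<close> by simp
  next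
    case (Some b) then show ?thesis using val_mul[OF assms Some a] \<open>a = 0\<close> by (subst neg_mul) simp
  qed
qed

lemma val_inv:
  assumes "valuation add mul zero type_og u" "mul x y = one" "u x = Some a"
  shows "u y = Some (- a)"
proof -
  have "y \<noteq> zero" using assms(2) mul_zero(2)[of x] one_nz by auto
  then obtain b where b: "u y = Some b" using val_zero[OF assms(1), of y] by (cases "u y") auto
  have "u (mul x y) = Some (a + b)" using val_mul[OF assms(1,3) b] .
  then have "Some (a + b) = Some 0" using assms(2) val_one[OF assms(1)] by simp
  then show ?thesis using b by (simp add: eq_neg_iff_add_eq_0 add.commute)
qed

end

context seg begin

abbreviation "Q \<equiv> quotient_og UNIV D"
abbreviation "cs \<equiv> map_option (coset D)"

lemma rho_D: "r \<in> \<rho> \<Longrightarrow> d \<in> D \<Longrightarrow> r - d \<in> \<rho>"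
  using D_iff by blast

lemma q_shift: "coset D s \<in> shift Q (coset D ` \<rho>) (coset D m) \<longleftrightarrow> s - m \<in> \<rho>"
proof
  assume "coset D s \<in> shift Q (coset D ` \<rho>) (coset D m)"
  then obtain r where r: "r \<in> \<rho>" "coset D s = coset D (r + m)"
    unfolding shift_def by (auto simp: q_add)
  then have "r + m - s \<in> D" using coset_eq by blast
  then have "r - (r + m - s) \<in> \<rho>" using rho_D r(1) by blast
  then show "s - m \<in> \<rho>" by (simp add: algebra_simps)
next
  assume "s - m \<in> \<rho>"
  then have "coset D (s - m) \<in> coset D ` \<rho>" by blast
  moreover have "og_add Q (coset D (s - m)) (coset D m) = coset D s" by (simp add: q_add)
  ultimately show "coset D s \<in> shift Q (coset D ` \<rho>) (coset D m)"
    unfolding shift_def by (metis image_eqI)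
qed

lemma above_transfer: "above_shift Q (coset D ` \<rho>) (cs p) (cs q) = above_shift type_og \<rho> p q"
  by (cases p; cases q) (simp_all add: q_shift shift_type_og)

lemma le_transfer: "ext_le type_og p q \<Longrightarrow> ext_le Q (cs p) (cs q)"
  by (cases p; cases q) (simp_all add: q_le type_og_def P_nonneg)

lemma min_transfer: "ext_min Q (cs p) (cs q) = cs (ext_min type_og p q)"
proof (cases p)
  case None then show ?thesis by (cases q) (simp_all add: ext_min_def)
next
  case (Some a)
  show ?thesis
  proof (cases q)
    case None then show ?thesis using Some by (simp add: ext_min_def)
  next
    case (Some b)
    show ?thesis
    proof (cases "a \<le> b")
      case True then show ?thesis using \<open>p = Some a\<close> Some by (simp add: ext_min_def q_le type_og_def P_nonneg)
    next
      case False
      then have "a - b \<in> P" using P_nonneg by simp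
      then have "b - a \<in> P \<Longrightarrow> coset D a = coset D b"
        using P_neg_D coset_eq by (metis minus_diff_eq)
      then show ?thesis using \<open>p = Some a\<close> Some False by (auto simp add: ext_min_def q_le type_og_def)
    qed
  qed
qed

lemma rho'_seg: "initial_segment Q (range (coset D)) (coset D ` \<rho>)"
  unfolding initial_segment_def
proof (intro conjI ballI impI)
  show "coset D ` \<rho> \<subseteq> range (coset D)" by blast
next
  fix B A assume "B \<in> coset D ` \<rho>" "A \<in> range (coset D)" "og_le Q A B \<and> A \<noteq> B"
  then obtain a b where ab: "B = coset D b" "b \<in> \<rho>" "A = coset D a" "og_le Q A B" "A \<noteq> B"
    by blast
  then have ab2: "b - a \<in> P" "coset D a \<noteq> coset D b" using q_le by auto
  then have "b - a \<notin> D" using coset_eq ab2 by blast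
  then have "a < b" using P_notD_pos ab2(1) by fastforce
  then show "A \<in> coset D ` \<rho>" using ab down by (metis image_eqI less_imp_le)
qed

end


locale mainloc = hf add mul zero one
  for add :: "'a \<Rightarrow> 'a \<Rightarrow> 'a set" and mul :: "'a \<Rightarrow> 'a \<Rightarrow> 'a" and zero one :: 'a +
  fixes v :: "'a \<Rightarrow> ('g::linordered_ab_group_add) option" and \<rho> :: "'g set"
    and w :: "'a \<Rightarrow> ('h::linordered_ab_group_add) option"
  assumes KV: "krasner_valuation add mul zero type_og v"
    and KN: "krasner_norm add zero type_og v \<rho>"
    and W: "valuation add mul zero type_og w"
    and R: "valuation_ring type_og w = {x. hsub add zero x x \<subseteq> hsub add zero one one}"
begin

lemma VV: "valuation add mul zero type_og v"
  using KV unfolding krasner_valuation_def by blast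

lemma vg: "value_group v = UNIV"
  unfolding value_group_def using val_surj[OF VV] by blast

lemma KN1: "initial_segment type_og UNIV \<rho>" "og_zero type_og \<in> \<rho>"
  using KN unfolding krasner_norm_def vg by blast+

lemma KN2: "z \<in> add x y \<Longrightarrow>
        (t \<in> add x y \<longleftrightarrow>
          (\<forall>s\<in>hsub add zero z t. above_shift type_og \<rho> (v s) (ext_min type_og (v x) (v y))))"
  using KN unfolding krasner_norm_def by blast

lemma seg_rho: "seg \<rho>"
proof
  show "0 \<in> \<rho>" using KN1(2) by (simp add: type_og_def)
  fix a b :: 'g assume "b \<in> \<rho>" "a \<le> b"
  then show "a \<in> \<rho>" using KN1(1) unfolding initial_segment_def
    by (cases "a = b") (auto simp: type_og_def)
qed

interpretation S: seg \<rho> by (rule seg_rho)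

lemma xx:
  assumes "v x = Some g"
  shows "t \<in> hsub add zero x x \<longleftrightarrow> t = zero \<or> (\<exists>a. v t = Some a \<and> a - g \<notin> \<rho>)"
proof -
  have "t \<in> add x (neg x) \<longleftrightarrow>
     (\<forall>s\<in>hsub add zero zero t. above_shift type_og \<rho> (v s) (ext_min type_og (v x) (v (neg x))))"
    using KN2[OF neg_in] .
  also have "\<dots> \<longleftrightarrow> above_shift type_og \<rho> (v t) (Some g)"
    using assms by (simp add: hsub_zero val_neg[OF VV] ext_min_def type_og_def)
  also have "\<dots> \<longleftrightarrow> t = zero \<or> (\<exists>a. v t = Some a \<and> a - g \<notin> \<rho>)"
    using val_zero[OF VV, of t] by (cases "v t") (simp_all add: shift_type_og)
  finally show ?thesis by (simp add: hsub_def)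
qed

lemma key_ring:
  assumes "v x = Some g"
  shows "x \<in> valuation_ring type_og w \<longleftrightarrow> g \<in> S.P"
proof -
  have one: "t \<in> hsub add zero one one \<longleftrightarrow> t = zero \<or> (\<exists>a. v t = Some a \<and> a \<notin> \<rho>)" for t
    using xx[OF val_one[OF VV]] by simp
  have "hsub add zero x x \<subseteq> hsub add zero one one \<longleftrightarrow> g \<in> S.P"
  proof
    assume sub: "hsub add zero x x \<subseteq> hsub add zero one one"
    show "g \<in> S.P" unfolding S.P_iff
    proof
      fix d assume d: "d \<in> \<rho>"
      show "d - g \<in> \<rho>"
      proof (rule ccontr)
        assume "d - g \<notin> \<rho>"
        obtain t where t: "v t = Some d" using val_surj[OF VV] by blast
        then have "t \<in> hsub add zero x x" using xx[OF assms] \<open>d - g \<notin> \<rho>\<close> by blast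
        then have "t \<in> hsub add zero one one" using sub by blast
        then show False using one t d val_zero[OF VV, of t] by auto
      qed
    qed
  next
    assume "g \<in> S.P"
    then show "hsub add zero x x \<subseteq> hsub add zero one one"
      using xx[OF assms] one S.P_iff by blast
  qed
  then show ?thesis using R by blast
qed

lemma vr_iff: "w x = Some h \<Longrightarrow> x \<in> valuation_ring type_og w \<longleftrightarrow> 0 \<le> h"
  unfolding valuation_ring_def by (simp add: type_og_def)

lemma WV:
  assumes "x \<noteq> zero" "y \<noteq> zero" "v x = Some a" "v y = Some b" "w x = Some h" "w y = Some k"
  shows "h \<le> k \<longleftrightarrow> b - a \<in> S.P"
proof -
  obtain x' where x': "x' \<noteq> zero" "mul x x' = one" using inv_ex assms(1) by blast
  have "w x' = Some (- h)" "v x' = Some (- a)" using val_inv[OF W x'(2) assms(5)] val_inv[OF VV x'(2) assms(3)] by auto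
  then have "w (mul y x') = Some (k + - h)" "v (mul y x') = Some (b + - a)"
    using val_mul[OF W assms(6)] val_mul[OF VV assms(4)] by auto
  then have "0 \<le> k + - h \<longleftrightarrow> b + - a \<in> S.P" using key_ring vr_iff by metis
  then show ?thesis by (simp add: algebra_simps)
qed


lemma w_nz: "w x = Some h \<Longrightarrow> x \<noteq> zero" using val_zero[OF W, of x] by auto
lemma v_nz: "v x = Some h \<Longrightarrow> x \<noteq> zero" using val_zero[OF VV, of x] by auto

definition sig :: "'h \<Rightarrow> 'g set" where "sig h = coset S.D (the (v (SOME x. w x = Some h)))"

lemma nz_some: "x \<noteq> zero \<Longrightarrow> \<exists>a. v x = Some a" "x \<noteq> zero \<Longrightarrow> \<exists>h. w x = Some h"
  using val_zero[OF VV, of x] val_zero[OF W, of x] by auto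

lemma WD:
  assumes "w x = Some h"
  shows "sig h = coset S.D (the (v x))"
proof -
  define x0 where "x0 = (SOME x. w x = Some h)"
  have x0: "w x0 = Some h" unfolding x0_def by (rule someI[of "\<lambda>x. w x = Some h", OF assms])
  have nz: "x \<noteq> zero" "x0 \<noteq> zero" using w_nz[OF assms] w_nz[OF x0] .
  obtain a where a1: "v x = Some a" using nz_some(1)[OF nz(1)] by blast
  obtain a0 where a2: "v x0 = Some a0" using nz_some(1)[OF nz(2)] by blast
  note a = a1 a2
  have 1: "a - a0 \<in> S.P" using WV[OF nz(2) nz(1) a(2) a(1) x0 assms] by simp
  have 2: "a0 - a \<in> S.P" using WV[OF nz a assms x0] by simp
  have "a - a0 \<in> S.D" using S.P_neg_D[OF 1] 2 by simp
  then have "coset S.D a0 = coset S.D a" using S.coset_eq by blast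
  then show ?thesis unfolding sig_def using a x0_def by simp
qed

lemma equiv_main: "equivalent_valuations type_og w (quotient_og (value_group v) S.D) (coarsening v S.D)"
  unfolding equivalent_valuations_def vg
proof (intro exI[of _ sig] conjI ballI allI)
  show "bij_betw sig (og_carrier type_og) (og_carrier S.Q)"
    unfolding bij_betw_def S.q_carrier
  proof
    show "inj_on sig (og_carrier type_og)"
    proof (rule inj_onI)
      fix h k assume "sig h = sig k"
      obtain x y where xy: "w x = Some h" "w y = Some k" using val_surj[OF W] by blast
      then have nz: "x \<noteq> zero" "y \<noteq> zero" using w_nz by blast+
      obtain a where ab1: "v x = Some a" using nz_some(1)[OF nz(1)] by blast
  obtain b where ab2: "v y = Some b" using nz_some(1)[OF nz(2)] by blast
  note ab = ab1 ab2
      have "coset S.D a = coset S.D b" using \<open>sig h = sig k\<close> WD xy ab by simp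
      then have "b - a \<in> S.D" "a - b \<in> S.D" using S.coset_eq by blast+
      then have "h \<le> k" "k \<le> h" using WV[OF nz ab xy] WV[OF nz(2,1) ab(2,1) xy(2,1)] S.D_P by auto
      then show "h = k" by simp
    qed
  next
    show "sig ` og_carrier type_og = range (coset S.D)"
    proof
      show "sig ` og_carrier type_og \<subseteq> range (coset S.D)" unfolding sig_def by blast
    next
      show "range (coset S.D) \<subseteq> sig ` og_carrier type_og"
      proof
        fix A assume "A \<in> range (coset S.D)"
        then obtain g where g: "A = coset S.D g" by blast
        obtain x where x: "v x = Some g" using val_surj[OF VV] by blast
        then have "x \<noteq> zero" using v_nz by blast
        then obtain h where "w x = Some h" using nz_some(2) by blast
        then have "sig h = A" using WD x g by simp
        then show "A \<in> sig ` og_carrier type_og" by (auto simp: type_og_def)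
      qed
    qed
  qed
next
  fix h k :: 'h assume "h \<in> og_carrier type_og" "k \<in> og_carrier type_og"
  obtain x y where xy: "w x = Some h" "w y = Some k" using val_surj[OF W] by blast
  then have nz: "x \<noteq> zero" "y \<noteq> zero" using w_nz by blast+
  obtain a where ab1: "v x = Some a" using nz_some(1)[OF nz(1)] by blast
  obtain b where ab2: "v y = Some b" using nz_some(1)[OF nz(2)] by blast
  note ab = ab1 ab2
  have m: "w (mul x y) = Some (h + k)" "v (mul x y) = Some (a + b)"
    using val_mul[OF W xy] val_mul[OF VV ab] by auto
  show "sig (og_add type_og h k) = og_add S.Q (sig h) (sig k)"
    using WD[OF m(1)] WD[OF xy(1)] WD[OF xy(2)] m ab by (simp add: S.q_add type_og_def)
  show "og_le type_og h k = og_le S.Q (sig h) (sig k)"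
    using WD[OF xy(1)] WD[OF xy(2)] ab WV[OF nz ab xy] by (simp add: S.q_le type_og_def)
next
  fix x
  show "coarsening v S.D x = map_option sig (w x)"
  proof (cases "x = zero")
    case True then show ?thesis using val_zero[OF VV, of zero] val_zero[OF W, of zero] by (simp add: coarsening_def)
  next
    case False
    then obtain a and h :: 'h where "v x = Some a" "w x = Some h" using nz_some(1)[OF False] nz_some(2)[OF False] by blast
    then show ?thesis using WD by (simp add: coarsening_def)
  qed
qed


lemma u_def: "coarsening v S.D x = S.cs (v x)"
  by (simp add: coarsening_def)

lemma u_zero: "coarsening v S.D x = None \<longleftrightarrow> x = zero"
  using val_zero[OF VV, of x] by (simp add: coarsening_def)

lemma u_range: "range (coarsening v S.D) = insert None (Some ` og_carrier S.Q)"
proof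
  show "range (coarsening v S.D) \<subseteq> insert None (Some ` og_carrier S.Q)"
  proof
    fix o1 assume "o1 \<in> range (coarsening v S.D)"
    then obtain x where "o1 = coarsening v S.D x" by blast
    then show "o1 \<in> insert None (Some ` og_carrier S.Q)"
      by (cases "v x") (simp_all add: coarsening_def S.q_carrier)
  qed
next
  show "insert None (Some ` og_carrier S.Q) \<subseteq> range (coarsening v S.D)"
  proof
    fix o1 assume o1: "o1 \<in> insert None (Some ` og_carrier S.Q)"
    show "o1 \<in> range (coarsening v S.D)"
    proof (cases "o1 = None")
      case True
      have "coarsening v S.D zero = None" by (simp add: u_zero)
      then show ?thesis using True by (metis rangeI)
    next
      case False
      then obtain A where A: "o1 = Some A" "A \<in> og_carrier S.Q" using o1 by blast
      then obtain g where g: "A = coset S.D g" unfolding S.q_carrier by blast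
      obtain x where "v x = Some g" using val_surj[OF VV] by blast
      then have "coarsening v S.D x = o1" using A g by (simp add: coarsening_def)
      then show ?thesis by (metis rangeI)
    qed
  qed
qed

lemma u_vg: "value_group (coarsening v S.D) = range (coset S.D)"
proof
  show "value_group (coarsening v S.D) \<subseteq> range (coset S.D)"
  proof
    fix g assume "g \<in> value_group (coarsening v S.D)"
    then obtain x where "coarsening v S.D x = Some g" unfolding value_group_def by blast
    then have "Some g \<in> range (coarsening v S.D)" by (metis rangeI)
    then show "g \<in> range (coset S.D)" unfolding u_range S.q_carrier by blast
  qed
next
  show "range (coset S.D) \<subseteq> value_group (coarsening v S.D)"
  proof
    fix g assume "g \<in> range (coset S.D)"
    then have "Some g \<in> range (coarsening v S.D)" unfolding u_range S.q_carrier by blast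
    then show "g \<in> value_group (coarsening v S.D)" unfolding value_group_def by (metis (mono_tags, lifting) imageE mem_Collect_eq)
  qed
qed

lemma u_mul: "coarsening v S.D (mul x y) = ext_add S.Q (coarsening v S.D x) (coarsening v S.D y)"
proof (cases "x = zero \<or> y = zero")
  case True
  then have "mul x y = zero" using mul_zero by auto
  then have "coarsening v S.D (mul x y) = None" by (simp add: u_zero)
  moreover have "coarsening v S.D x = None \<or> coarsening v S.D y = None" using True by (simp add: u_zero)
  ultimately show ?thesis by (cases "coarsening v S.D x"; cases "coarsening v S.D y") auto
next
  case False
  then obtain a b where "v x = Some a" "v y = Some b" using nz_some(1)[of x] nz_some(1)[of y] by blast
  then show ?thesis using val_mul[OF VV] by (simp add: coarsening_def S.q_add)
qed

lemma u_val: "valuation add mul zero S.Q (coarsening v S.D)"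
  unfolding valuation_def
proof (intro conjI allI impI)
  show "ordered_abelian_group S.Q" by (rule S.q_oag)
  show "range (coarsening v S.D) = insert None (Some ` og_carrier S.Q)" by (rule u_range)
  fix x show "coarsening v S.D x = None \<longleftrightarrow> x = zero" by (rule u_zero)
next
  fix x y show "coarsening v S.D (mul x y) = ext_add S.Q (coarsening v S.D x) (coarsening v S.D y)" by (rule u_mul)
next
  fix x y z assume "z \<in> add x y"
  then have "ext_le type_og (ext_min type_og (v x) (v y)) (v z)"
    using V4[OF VV] by blast
  then show "ext_le S.Q (ext_min S.Q (coarsening v S.D x) (coarsening v S.D y)) (coarsening v S.D z)"
    unfolding u_def S.min_transfer by (rule S.le_transfer)
qed

lemma u_kv: "krasner_valuation add mul zero S.Q (coarsening v S.D)"
  unfolding krasner_valuation_def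
proof (intro conjI allI impI)
  show "valuation add mul zero S.Q (coarsening v S.D)" by (rule u_val)
next
  fix x y assume "zero \<notin> add x y"
  moreover have "\<forall>x y. zero \<notin> add x y \<longrightarrow> (\<exists>c. v ` add x y = {c})"
    using KV unfolding krasner_valuation_def by (elim conjE) assumption
  ultimately obtain c where "v ` add x y = {c}" by blast
  moreover have "coarsening v S.D ` add x y = S.cs ` (v ` add x y)"
    by (simp add: image_image coarsening_def)
  ultimately have "coarsening v S.D ` add x y = {S.cs c}" by simp
  then show "\<exists>c. coarsening v S.D ` add x y = {c}" by blast
next
  show "\<exists>\<rho>'. krasner_norm add zero S.Q (coarsening v S.D) \<rho>'"
  proof (intro exI[of _ "coset S.D ` \<rho>"])
    show "krasner_norm add zero S.Q (coarsening v S.D) (coset S.D ` \<rho>)"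
      unfolding krasner_norm_def u_vg
    proof (intro conjI allI impI)
      show "initial_segment S.Q (range (coset S.D)) (coset S.D ` \<rho>)" by (rule S.rho'_seg)
      show "og_zero S.Q \<in> coset S.D ` \<rho>" using S.zin by (simp add: S.q_zero)
    next
      fix x y z t assume "z \<in> add x y"
      then show "t \<in> add x y \<longleftrightarrow> (\<forall>s\<in>hsub add zero z t.
          above_shift S.Q (coset S.D ` \<rho>) (coarsening v S.D s) (ext_min S.Q (coarsening v S.D x) (coarsening v S.D y)))"
        unfolding u_def S.min_transfer S.above_transfer by (rule KN2)
    qed
  qed
qed

end

theorem theorem6p2:
  fixes add :: "'a \<Rightarrow> 'a \<Rightarrow> 'a set" and mul :: "'a \<Rightarrow> 'a \<Rightarrow> 'a"
    and zero one :: 'a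
    and v :: "'a \<Rightarrow> ('g::linordered_ab_group_add) option" and \<rho> :: "'g set"
    and w :: "'a \<Rightarrow> ('h::linordered_ab_group_add) option"
  assumes "hyperfield add mul zero one"
    and "krasner_valuation add mul zero type_og v"
    and "krasner_norm add zero type_og v \<rho>"
    and "valuation add mul zero type_og w"
    and "valuation_ring type_og w = {x. hsub add zero x x \<subseteq> hsub add zero one one}"
  shows "equivalent_valuations type_og w
           (quotient_og (value_group v) (ig type_og \<rho>)) (coarsening v (ig type_og \<rho>))
       \<and> krasner_valuation add mul zero
           (quotient_og (value_group v) (ig type_og \<rho>)) (coarsening v (ig type_og \<rho>))"
proof -
  interpret M: mainloc add mul zero one v \<rho> w
    by (intro mainloc.intro hf.intro mainloc_axioms.intro) (rule assms)+
  have D: "seg.D \<rho> = ig type_og \<rho>" by (rule seg.D_def[OF M.seg_rho])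
  show ?thesis using M.equiv_main M.u_kv unfolding D M.vg by simp
qed

end
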